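(* Suppose $h$ satisfies: there are $\alpha_h\in(0,2]$, $C_h\ge1$, $\theta_h\in(0,\infty]$ with $h(r)\le C_h\lambda^{\alpha_h}h(\lambda r)$ for all $\lambda\le1$, $r<\theta_h$. Let $\mathfrak h:(0,\infty)\to(0,\infty)$ be non-increasing with $\lambda^{\alpha_{\mathfrak h}}\mathfrak h(\lambda t)\le c_{\mathfrak h}\mathfrak h(t)$ for all $\lambda\le1$, $t<\theta_{\mathfrak h}$, for some $\alpha_{\mathfrak h}\le1$, $c_{\mathfrak h}\ge1$, $\theta_{\mathfrak h}\in(0,\infty]$. Then there is $c$ depending only on $d,\alpha_h,C_h,\alpha_{\mathfrak h},c_{\mathfrak h}$ such that for all $s,t>0$ with $s+t<(1/h(\theta_h))\wedge\theta_{\mathfrak h}$ and all $x,y\in\mathbb{R}^d$, $\mathfrak h(s)\rho_s(x)\wedge\mathfrak h(t)\rho_t(y)\le c\,\mathfrak h(s+t)\rho_{s+t}(x+y)$. In particular (taking $\mathfrak h\equiv1$), there is $c=c(d,\alpha_h,C_h)$ with $\rho_s(x)\wedge\rho_t(y)\le c\,\rho_{s+t}(x+y)$ for $s+t<1/h(\theta_h)$.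
   Context: Let $d\in\mathbb{N}$ and let $\nu:[0,\infty)\to[0,\infty]$ be non-increasing with $\int_{\mathbb{R}^d}(1\wedge|x|^2)\nu(|x|)\,dx<\infty$. For $r>0$ let $h(r)=\int_{\mathbb{R}^d}\big(1\wedge \tfrac{|x|^2}{r^2}\big)\nu(|x|)\,dx$ and $K(r)=r^{-2}\int_{|x|<r}|x|^2\nu(|x|)\,dx$; assume $h(0^+)=\infty$, so $h$ is a continuous strictly decreasing bijection of $(0,\infty)$ onto $(0,\infty)$ with inverse $h^{-1}$; $1/h(\infty):=\infty$. Bound function: $\rho_t(x)=[h^{-1}(1/t)]^{-d}\wedge \frac{tK(|x|)}{|x|^d}$ for $t>0$, $x\in\mathbb{R}^d$. *)

theory Defs
  imports "HOL-Analysis.Analysis"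
begin

text \<open>The dimension d is DIM('a) for the Euclidean space 'a; the type is passed via itself.
  The radial density nu takes values in [0,\<infinity>] (ennreal).\<close>

definition hfun :: "'a::euclidean_space itself \<Rightarrow> (real \<Rightarrow> ennreal) \<Rightarrow> real \<Rightarrow> real" where
  "hfun T \<nu> r = enn2real (\<integral>\<^sup>+ x. ennreal (min 1 (norm x ^ 2 / r ^ 2)) * \<nu> (norm x) \<partial>(lborel :: 'a measure))"

definition Kfun :: "'a::euclidean_space itself \<Rightarrow> (real \<Rightarrow> ennreal) \<Rightarrow> real \<Rightarrow> real" where
  "Kfun T \<nu> r = enn2real (\<integral>\<^sup>+ x. indicator {x. norm x < r} x * ennreal (norm x ^ 2) * \<nu> (norm x)
      \<partial>(lborel :: 'a measure)) / r ^ 2"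

text \<open>Inverse of the bijection h : (0,\<infinity>) \<rightarrow> (0,\<infinity>).\<close>
definition hinv :: "'a::euclidean_space itself \<Rightarrow> (real \<Rightarrow> ennreal) \<Rightarrow> real \<Rightarrow> real" where
  "hinv T \<nu> u = (THE r. 0 < r \<and> hfun T \<nu> r = u)"

text \<open>Bound function rho_t(x); at x = 0 the second term t K(|x|)/|x|^d is read as +\<infinity>.\<close>
definition rho :: "(real \<Rightarrow> ennreal) \<Rightarrow> real \<Rightarrow> 'a::euclidean_space \<Rightarrow> real" where
  "rho \<nu> t x =
     (if x = 0 then inverse (hinv TYPE('a) \<nu> (1 / t) ^ DIM('a))
      else min (inverse (hinv TYPE('a) \<nu> (1 / t) ^ DIM('a)))
               (t * Kfun TYPE('a) \<nu> (norm x) / norm x ^ DIM('a)))"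

definition inv_h_at :: "'a::euclidean_space itself \<Rightarrow> (real \<Rightarrow> ennreal) \<Rightarrow> ereal \<Rightarrow> ereal" where
  "inv_h_at T \<nu> \<theta> = (if \<theta> = \<infinity> then \<infinity> else ereal (1 / hfun T \<nu> (real_of_ereal \<theta>)))"

definition admissible_nu :: "'a::euclidean_space itself \<Rightarrow> (real \<Rightarrow> ennreal) \<Rightarrow> bool" where
  "admissible_nu T \<nu> \<longleftrightarrow>
     (\<forall>a b. 0 \<le> a \<longrightarrow> a \<le> b \<longrightarrow> \<nu> b \<le> \<nu> a) \<and>
     (\<integral>\<^sup>+ x. ennreal (min 1 (norm x ^ 2)) * \<nu> (norm x) \<partial>(lborel :: 'a measure)) < \<infinity> \<and>
     filterlim (hfun T \<nu>) at_top (at_right 0)"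

end

theory Submission
  imports Defs
begin

lemma nu_meas:
  fixes \<nu> :: "real \<Rightarrow> ennreal"
  assumes mono: "\<And>a b. 0 \<le> a \<Longrightarrow> a \<le> b \<Longrightarrow> \<nu> b \<le> \<nu> a"
  shows "(\<lambda>x::'a::euclidean_space. \<nu> (norm x)) \<in> borel_measurable borel"
proof (rule borel_measurableI_greater)
  fix y
  let ?S = "{r::real. 0 \<le> r \<and> y < \<nu> r}"
  have "is_interval ?S"
    unfolding is_interval_1
    apply clarsimp
    by (metis mono order_trans order_less_le_trans)
  then have "?S \<in> sets borel" by (rule real_interval_borel_measurable)
  then have "norm -` ?S \<inter> space borel \<in> sets (borel :: 'a measure)"
    by (intro measurable_sets[OF borel_measurable_norm]) auto
  moreover have "{x \<in> space borel. y < \<nu> (norm x)} = norm -` ?S \<inter> space borel" by auto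
  ultimately show "{x \<in> space borel. y < \<nu> (norm (x::'a))} \<in> sets borel" by simp
qed

lemma nn_integral_scale:
  fixes f :: "'a::euclidean_space \<Rightarrow> ennreal"
  assumes [measurable]: "f \<in> borel_measurable borel" and c: "0 < c"
  shows "(\<integral>\<^sup>+x. f x \<partial>lborel) = ennreal (c ^ DIM('a)) * (\<integral>\<^sup>+x. f (c *\<^sub>R x) \<partial>lborel)"
proof -
  have "(\<integral>\<^sup>+x. f x \<partial>lborel) = (\<integral>\<^sup>+x. f x \<partial>(density (distr lborel borel (\<lambda>x. 0 + c *\<^sub>R x)) (\<lambda>_. \<bar>c\<bar>^DIM('a))))"
    using lborel_affine[where 'a='a, of c 0] c by simp
  also have "\<dots> = (\<integral>\<^sup>+x. ennreal (c ^ DIM('a)) * f (c *\<^sub>R x) \<partial>lborel)"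
    using c by (simp add: nn_integral_density nn_integral_distr)
  also have "\<dots> = ennreal (c ^ DIM('a)) * (\<integral>\<^sup>+x. f (c *\<^sub>R x) \<partial>lborel)"
    by (simp add: nn_integral_cmult)
  finally show ?thesis .
qed

lemma adm_mono: "admissible_nu TYPE('a::euclidean_space) \<nu> \<Longrightarrow> 0 \<le> a \<Longrightarrow> a \<le> b \<Longrightarrow> \<nu> b \<le> \<nu> a"
  unfolding admissible_nu_def by blast

lemma adm_meas: "admissible_nu TYPE('a::euclidean_space) \<nu> \<Longrightarrow> (\<lambda>x::'a. \<nu> (norm x)) \<in> borel_measurable borel"
  by (rule nu_meas) (rule adm_mono)

lemma adm_fin: "admissible_nu TYPE('a::euclidean_space) \<nu> \<Longrightarrow>
   (\<integral>\<^sup>+ x. ennreal (min 1 (norm x ^ 2)) * \<nu> (norm x) \<partial>(lborel :: 'a measure)) < \<infinity>"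
  unfolding admissible_nu_def by blast

lemma min_bound: "0 < (r::real) \<Longrightarrow> 0 \<le> n \<Longrightarrow> min 1 (n^2/r^2) \<le> max 1 (1/r^2) * min 1 (n^2)"
proof (cases "n \<le> 1")
  case True
  assume r: "0 < r" "0 \<le> n"
  have "n^2/r^2 = (1/r^2) * n^2" by simp
  also have "\<dots> \<le> max 1 (1/r^2) * n^2" by (intro mult_right_mono) auto
  moreover have "n^2 \<le> 1" using True r by (simp add: power_le_one)
  ultimately show ?thesis by (simp add: min_def)
next
  case False
  then have "min 1 (n^2) = 1" using one_le_power[of n 2] by auto
  then show ?thesis by auto
qed

lemma ind_bound: "0 < (r::real) \<Longrightarrow> 0 \<le> n \<Longrightarrow> indicator {x. x < r} n * n^2 \<le> max 1 (r^2) * min 1 (n^2)"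
proof (cases "n \<le> 1")
  case True
  assume r: "0 < r" "0 \<le> n"
  have "indicator {x. x < r} n * n^2 \<le> n^2" by (simp add: indicator_def)
  also have "\<dots> \<le> max 1 (r^2) * n^2" using mult_right_mono[of 1 "max 1 (r^2)" "n^2"] by simp
  finally show ?thesis using True r
    by (simp add: power_le_one)
next
  case False
  assume r: "0 < r" "0 \<le> n"
  then have "min 1 (n^2) = 1" using False one_le_power[of n 2] by auto
  moreover have "indicator {x. x < r} n * n^2 \<le> r^2"
    using r by (auto simp: indicator_def intro!: power_mono)
  ultimately show ?thesis by auto
qed

lemma h_fin:
  assumes adm: "admissible_nu TYPE('a::euclidean_space) \<nu>" and r: "0 < r"
  shows "(\<integral>\<^sup>+ x. ennreal (min 1 (norm x ^ 2 / r ^ 2)) * \<nu> (norm x) \<partial>(lborel :: 'a measure)) < \<infinity>"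
proof -
  have [measurable]: "(\<lambda>x::'a. \<nu> (norm x)) \<in> borel_measurable borel" by (rule adm_meas[OF adm])
  have "(\<integral>\<^sup>+ x. ennreal (min 1 (norm x ^ 2 / r ^ 2)) * \<nu> (norm x) \<partial>(lborel :: 'a measure))
     \<le> (\<integral>\<^sup>+ x. ennreal (max 1 (1/r^2)) * (ennreal (min 1 (norm x ^ 2)) * \<nu> (norm x)) \<partial>(lborel :: 'a measure))"
  proof (intro nn_integral_mono)
    fix x :: 'a
    have "ennreal (min 1 (norm x ^ 2 / r ^ 2)) \<le> ennreal (max 1 (1/r^2) * min 1 (norm x ^ 2))"
      by (rule ennreal_leI) (rule min_bound[OF r norm_ge_zero[of x]])
    also have "\<dots> = ennreal (max 1 (1/r^2)) * ennreal (min 1 (norm x ^ 2))"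
      by (rule ennreal_mult) auto
    finally have "ennreal (min 1 (norm x ^ 2 / r ^ 2)) * \<nu> (norm x) \<le> (ennreal (max 1 (1/r^2)) * ennreal (min 1 (norm x ^ 2))) * \<nu> (norm x)"
      by (rule mult_right_mono) simp
    then show "ennreal (min 1 (norm x ^ 2 / r ^ 2)) * \<nu> (norm x) \<le> ennreal (max 1 (1/r^2)) * (ennreal (min 1 (norm x ^ 2)) * \<nu> (norm x))"
      by (simp add: mult.assoc)
  qed
  also have "\<dots> = ennreal (max 1 (1/r^2)) * (\<integral>\<^sup>+ x. ennreal (min 1 (norm x ^ 2)) * \<nu> (norm x) \<partial>(lborel :: 'a measure))"
    by (simp add: nn_integral_cmult)
  also have "\<dots> < \<infinity>" using adm_fin[OF adm] by (simp add: ennreal_mult_less_top)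
  finally show ?thesis .
qed

lemma J_fin:
  assumes adm: "admissible_nu TYPE('a::euclidean_space) \<nu>" and r: "0 < r"
  shows "(\<integral>\<^sup>+ x. indicator {x. norm x < r} x * ennreal (norm x ^ 2) * \<nu> (norm x) \<partial>(lborel :: 'a measure)) < \<infinity>"
proof -
  have [measurable]: "(\<lambda>x::'a. \<nu> (norm x)) \<in> borel_measurable borel" by (rule adm_meas[OF adm])
  have "(\<integral>\<^sup>+ x. indicator {x. norm x < r} x * ennreal (norm x ^ 2) * \<nu> (norm x) \<partial>(lborel :: 'a measure))
     \<le> (\<integral>\<^sup>+ x. ennreal (max 1 (r^2)) * (ennreal (min 1 (norm x ^ 2)) * \<nu> (norm x)) \<partial>(lborel :: 'a measure))"
  proof (intro nn_integral_mono)
    fix x :: 'a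
    have "indicator {x. norm x < r} x * ennreal (norm x ^ 2) = ennreal (indicator {x. x < r} (norm x) * norm x ^ 2)"
      by (cases "norm x < r") (auto simp: indicator_def)
    also have "\<dots> \<le> ennreal (max 1 (r^2) * min 1 (norm x ^ 2))"
      by (rule ennreal_leI) (rule ind_bound[OF r norm_ge_zero[of x]])
    also have "\<dots> = ennreal (max 1 (r^2)) * ennreal (min 1 (norm x ^ 2))"
      by (rule ennreal_mult) auto
    finally have "indicator {x. norm x < r} x * ennreal (norm x ^ 2) * \<nu> (norm x) \<le> (ennreal (max 1 (r^2)) * ennreal (min 1 (norm x ^ 2))) * \<nu> (norm x)"
      by (rule mult_right_mono) simp
    then show "indicator {x. norm x < r} x * ennreal (norm x ^ 2) * \<nu> (norm x) \<le> ennreal (max 1 (r^2)) * (ennreal (min 1 (norm x ^ 2)) * \<nu> (norm x))"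
      by (simp add: mult.assoc)
  qed
  also have "\<dots> = ennreal (max 1 (r^2)) * (\<integral>\<^sup>+ x. ennreal (min 1 (norm x ^ 2)) * \<nu> (norm x) \<partial>(lborel :: 'a measure))"
    by (simp add: nn_integral_cmult)
  also have "\<dots> < \<infinity>" using adm_fin[OF adm] by (simp add: ennreal_mult_less_top)
  finally show ?thesis .
qed

lemma min_mono_r: "0 < (a::real) \<Longrightarrow> a \<le> r \<Longrightarrow> min 1 (n^2/r^2) \<le> min 1 (n^2/a^2)"
proof -
  assume a: "0 < a" "a \<le> r"
  have "a^2 \<le> r^2" using a by (intro power_mono) auto
  then have "n^2/r^2 \<le> n^2/a^2" using a by (intro divide_left_mono) auto
  then show ?thesis by simp
qed

lemma integrand_bound:
  assumes a: "0 < (a::real)" "a \<le> r" and n: "0 \<le> n"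
  shows "ennreal (min 1 (n^2/r^2)) * v \<le> ennreal (max 1 (1/a^2)) * (ennreal (min 1 (n^2)) * v)"
proof -
  have "ennreal (min 1 (n^2/r^2)) \<le> ennreal (max 1 (1/a^2) * min 1 (n^2))"
    by (rule ennreal_leI) (rule order_trans[OF min_mono_r[OF a] min_bound[OF a(1) n]])
  also have "\<dots> = ennreal (max 1 (1/a^2)) * ennreal (min 1 (n^2))"
    by (rule ennreal_mult) auto
  finally have "ennreal (min 1 (n^2/r^2)) * v \<le> (ennreal (max 1 (1/a^2)) * ennreal (min 1 (n^2))) * v"
    by (rule mult_right_mono) simp
  then show ?thesis by (simp add: mult.assoc)
qed

lemma h_eq:
  assumes adm: "admissible_nu TYPE('a::euclidean_space) \<nu>" and r: "0 < r"
  shows "ennreal (hfun TYPE('a) \<nu> r) = (\<integral>\<^sup>+ x. ennreal (min 1 (norm x ^ 2 / r ^ 2)) * \<nu> (norm x) \<partial>(lborel :: 'a measure))"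
  unfolding hfun_def using h_fin[OF adm r] by (simp add: ennreal_enn2real less_top)

lemma h_mono:
  assumes adm: "admissible_nu TYPE('a::euclidean_space) \<nu>" and a: "0 < a" "a \<le> b"
  shows "hfun TYPE('a) \<nu> b \<le> hfun TYPE('a) \<nu> a"
  unfolding hfun_def
proof (rule enn2real_mono)
  show "(\<integral>\<^sup>+ x. ennreal (min 1 (norm x ^ 2 / a ^ 2)) * \<nu> (norm x) \<partial>(lborel :: 'a measure)) < top"
    using h_fin[OF adm a(1)] by simp
  show "(\<integral>\<^sup>+ x. ennreal (min 1 (norm x ^ 2 / b ^ 2)) * \<nu> (norm x) \<partial>(lborel :: 'a measure))
     \<le> (\<integral>\<^sup>+ x. ennreal (min 1 (norm x ^ 2 / a ^ 2)) * \<nu> (norm x) \<partial>(lborel :: 'a measure))"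
    by (intro nn_integral_mono mult_right_mono ennreal_leI min_mono_r a) simp
qed

lemma nu_pos:
  assumes adm: "admissible_nu TYPE('a::euclidean_space) \<nu>"
  shows "\<exists>\<delta>>0. 0 < \<nu> \<delta>"
proof (rule ccontr)
  assume "\<not> ?thesis"
  then have z: "\<And>\<delta>. 0 < \<delta> \<Longrightarrow> \<nu> \<delta> = 0" by (force simp: not_less)
  have h0: "hfun TYPE('a) \<nu> r = 0" for r
  proof -
    have "(\<lambda>x::'a. ennreal (min 1 (norm x ^ 2 / r ^ 2)) * \<nu> (norm x)) = (\<lambda>x. 0)"
    proof
      fix x :: 'a show "ennreal (min 1 (norm x ^ 2 / r ^ 2)) * \<nu> (norm x) = 0"
        by (cases "x = 0") (auto simp: z)
    qed
    then show ?thesis unfolding hfun_def by simp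
  qed
  have "filterlim (hfun TYPE('a) \<nu>) at_top (at_right 0)"
    using adm unfolding admissible_nu_def by blast
  then have "eventually (\<lambda>r. 1 \<le> hfun TYPE('a) \<nu> r) (at_right (0::real))"
    by (simp add: filterlim_at_top)
  then obtain b :: real where "b > 0" "\<And>y. y > 0 \<Longrightarrow> y < b \<Longrightarrow> 1 \<le> hfun TYPE('a) \<nu> y"
    unfolding eventually_at_right_field by blast
  from this(2)[of "b/2"] \<open>b > 0\<close> show False by (simp add: h0)
qed

lemma h_small:
  assumes adm: "admissible_nu TYPE('a::euclidean_space) \<nu>" and R: "0 < R"
  shows "\<exists>r0>0. r0 < R \<and> u \<le> hfun TYPE('a) \<nu> r0"
proof -
  have "filterlim (hfun TYPE('a) \<nu>) at_top (at_right 0)"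
    using adm unfolding admissible_nu_def by blast
  then have "eventually (\<lambda>r. u \<le> hfun TYPE('a) \<nu> r) (at_right (0::real))"
    by (simp add: filterlim_at_top)
  then obtain b :: real where "b > 0" "\<And>y. y > 0 \<Longrightarrow> y < b \<Longrightarrow> u \<le> hfun TYPE('a) \<nu> y"
    unfolding eventually_at_right_field by blast
  then show ?thesis using R
    by (intro exI[of _ "min (b/2) (R/2)"]) auto
qed

lemma AE_lborel_open:
  fixes U :: "'a::euclidean_space set"
  assumes ae: "AE x in lborel. P x" and U: "open U" "x0 \<in> U"
  shows "\<exists>x\<in>U. P x"
proof (rule ccontr)
  assume np: "\<not> (\<exists>x\<in>U. P x)"
  from ae obtain N where N: "{x \<in> space lborel. \<not> P x} \<subseteq> N" "emeasure lborel N = 0" "N \<in> sets lborel"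
    by (rule AE_E)
  obtain e where e: "0 < e" "ball x0 e \<subseteq> U" using U openE by blast
  then obtain a b where box: "x0 \<in> box a b" "box a b \<subseteq> ball x0 e"
    using rational_boxes[OF e(1), of x0] by blast
  then have "0 < emeasure lborel (box a b)"
    by (auto simp: emeasure_lborel_box_eq mem_box algebra_simps intro!: prod_pos)
  also have "\<dots> \<le> emeasure lborel N"
    using box e np N by (intro emeasure_mono) auto
  finally show False using N by simp
qed

lemma h_strict:
  assumes adm: "admissible_nu TYPE('a::euclidean_space) \<nu>" and a: "0 < a" "a < b"
  shows "hfun TYPE('a) \<nu> b < hfun TYPE('a) \<nu> a"
proof -
  have [measurable]: "(\<lambda>x::'a. \<nu> (norm x)) \<in> borel_measurable borel" by (rule adm_meas[OF adm])
  define fa where "fa = (\<lambda>x::'a. ennreal (min 1 (norm x ^ 2 / a ^ 2)) * \<nu> (norm x))"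
  define fb where "fb = (\<lambda>x::'a. ennreal (min 1 (norm x ^ 2 / b ^ 2)) * \<nu> (norm x))"
  have [measurable]: "fa \<in> borel_measurable lborel" "fb \<in> borel_measurable lborel"
    unfolding fa_def fb_def by measurable
  have b0: "0 < b" using a by simp
  have fina: "integral\<^sup>N lborel fa \<noteq> \<infinity>" using h_fin[OF adm a(1)] unfolding fa_def by simp
  have finb: "integral\<^sup>N lborel fb \<noteq> \<infinity>" using h_fin[OF adm b0] unfolding fb_def by simp
  have le: "fb x \<le> fa x" for x
    unfolding fa_def fb_def by (intro mult_right_mono ennreal_leI min_mono_r) (use a in auto)
  have nAE: "\<not> (AE x in lborel. fa x \<le> fb x)"
  proof
    assume ae1: "AE x in lborel. fa x \<le> fb x"
    have ae2: "AE x in lborel. fa x \<noteq> \<infinity>" by (rule nn_integral_PInf_AE) (use fina in auto)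
    have ae: "AE x in lborel. fa x \<le> fb x \<and> fa x \<noteq> \<infinity>" using ae1 ae2 by eventually_elim auto
    obtain \<delta> where d: "0 < \<delta>" "0 < \<nu> \<delta>" using nu_pos[OF adm] by blast
    define c where "c = min \<delta> b"
    have c: "0 < c" "c \<le> \<delta>" "c \<le> b" using d b0 unfolding c_def by auto
    obtain e :: 'a where e: "e \<in> Basis" using nonempty_Basis by blast
    define x0 where "x0 = (c/2) *\<^sub>R e"
    have nx0: "norm x0 = c/2" unfolding x0_def using e c by simp
    have "x0 \<in> ball x0 (c/4)" using c by simp
    from AE_lborel_open[OF ae open_ball this] obtain x where
      x: "x \<in> ball x0 (c/4)" "fa x \<le> fb x" "fa x \<noteq> \<infinity>" by blast
    have "dist x0 x < c/4" using x(1) by simp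
    moreover have "norm x0 - norm x \<le> dist x0 x" by (simp add: dist_norm norm_triangle_ineq2)
    moreover have "norm x - norm x0 \<le> dist x0 x" by (metis dist_commute dist_norm norm_triangle_ineq2)
    ultimately have nx: "c/4 < norm x" "norm x < 3*c/4" using nx0 by linarith+
    define n where "n = norm x"
    have n: "0 < n" "n < b" "n \<le> \<delta>" using nx c unfolding n_def by auto
    have vpos: "0 < \<nu> n" using d adm_mono[OF adm, of n \<delta>] n by auto
    have pa: "0 < min 1 (n^2/a^2)" using n a by simp
    have "n^2 < b^2" using n by (intro power_strict_mono) auto
    then have pb1: "n^2/b^2 < 1" using b0 by simp
    have "a^2 < b^2" using a by (intro power_strict_mono) auto
    then have "n^2/b^2 < n^2/a^2" using a n by (intro divide_strict_left_mono) auto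
    then have pab: "min 1 (n^2/b^2) < min 1 (n^2/a^2)" using pb1 by simp
    have "\<nu> n \<noteq> \<infinity>"
    proof
      assume "\<nu> n = \<infinity>"
      then have "fa x = \<infinity>" unfolding fa_def n_def[symmetric] using pa by (simp add: ennreal_mult_top)
      then show False using x by simp
    qed
    then obtain w where w: "\<nu> n = ennreal w" "0 \<le> w" by (cases "\<nu> n") auto
    have wpos: "0 < w" using vpos w by simp
    have "fb x = ennreal (min 1 (n^2/b^2) * w)" unfolding fb_def n_def[symmetric] w(1)
      using w by (simp add: ennreal_mult)
    also have "\<dots> < ennreal (min 1 (n^2/a^2) * w)"
      using pab wpos pa by (intro ennreal_lessI mult_strict_right_mono) auto
    also have "\<dots> = fa x" unfolding fa_def n_def[symmetric] w(1)
      using w pa by (simp add: ennreal_mult)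
    finally show False using x by simp
  qed
  have "integral\<^sup>N lborel fb < integral\<^sup>N lborel fa"
    by (rule nn_integral_less) (use finb le nAE in auto)
  then have "ennreal (hfun TYPE('a) \<nu> b) < ennreal (hfun TYPE('a) \<nu> a)"
    using h_eq[OF adm a(1)] h_eq[OF adm b0] unfolding fa_def fb_def by simp
  moreover have "0 \<le> hfun TYPE('a) \<nu> b" by (simp add: hfun_def)
  ultimately show ?thesis using ennreal_less_iff by blast
qed

lemma h_cont:
  assumes adm: "admissible_nu TYPE('a::euclidean_space) \<nu>" and a: "0 < a"
  shows "continuous_on {a..b} (hfun TYPE('a) \<nu>)"
proof (rule continuous_on_sequentiallyI)
  fix u :: "nat \<Rightarrow> real" and r
  assume u: "\<forall>n. u n \<in> {a..b}" and r: "r \<in> {a..b}" and lim: "u \<longlonglongrightarrow> r"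
  have [measurable]: "(\<lambda>x::'a. \<nu> (norm x)) \<in> borel_measurable borel" by (rule adm_meas[OF adm])
  have r0: "0 < r" using r a by auto
  have u0: "0 < u n" for n using u a by (auto intro: less_le_trans)
  have "(\<lambda>n. (\<integral>\<^sup>+ x. ennreal (min 1 (norm x ^ 2 / u n ^ 2)) * \<nu> (norm x) \<partial>(lborel :: 'a measure)))
     \<longlonglongrightarrow> (\<integral>\<^sup>+ x. ennreal (min 1 (norm x ^ 2 / r ^ 2)) * \<nu> (norm x) \<partial>(lborel :: 'a measure))"
  proof (rule nn_integral_dominated_convergence[where w="\<lambda>x. ennreal (max 1 (1/a^2)) * (ennreal (min 1 (norm x ^ 2)) * \<nu> (norm x))"
     and u="\<lambda>n x. ennreal (min 1 (norm x ^ 2 / u n ^ 2)) * \<nu> (norm x)" and u'="\<lambda>x. ennreal (min 1 (norm x ^ 2 / r ^ 2)) * \<nu> (norm x)"])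
    show "\<And>i. (\<lambda>x::'a. ennreal (min 1 (norm x ^ 2 / u i ^ 2)) * \<nu> (norm x)) \<in> borel_measurable lborel" by measurable
    show "(\<lambda>x::'a. ennreal (min 1 (norm x ^ 2 / r ^ 2)) * \<nu> (norm x)) \<in> borel_measurable lborel" by measurable
    show "(\<lambda>x::'a. ennreal (max 1 (1/a^2)) * (ennreal (min 1 (norm x ^ 2)) * \<nu> (norm x))) \<in> borel_measurable lborel" by measurable
    show "(\<integral>\<^sup>+ x. ennreal (max 1 (1/a^2)) * (ennreal (min 1 (norm x ^ 2)) * \<nu> (norm x)) \<partial>(lborel :: 'a measure)) < \<infinity>"
      using adm_fin[OF adm] by (simp add: nn_integral_cmult ennreal_mult_less_top)
    show "AE x in (lborel::'a measure). ennreal (min 1 (norm x ^ 2 / u j ^ 2)) * \<nu> (norm x)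
        \<le> ennreal (max 1 (1/a^2)) * (ennreal (min 1 (norm x ^ 2)) * \<nu> (norm x))" for j
      using u a by (intro AE_I2 integrand_bound) auto
    show "AE x in (lborel::'a measure). (\<lambda>i. ennreal (min 1 (norm x ^ 2 / u i ^ 2)) * \<nu> (norm x))
        \<longlonglongrightarrow> ennreal (min 1 (norm x ^ 2 / r ^ 2)) * \<nu> (norm x)"
    proof (rule AE_I2)
      fix x :: 'a
      show "(\<lambda>i. ennreal (min 1 (norm x ^ 2 / u i ^ 2)) * \<nu> (norm x))
        \<longlonglongrightarrow> ennreal (min 1 (norm x ^ 2 / r ^ 2)) * \<nu> (norm x)"
      proof (cases "x = 0")
        case True then show ?thesis by simp
      next
        case False
        have "(\<lambda>i. min 1 (norm x ^ 2 / u i ^ 2)) \<longlonglongrightarrow> min 1 (norm x ^ 2 / r ^ 2)"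
          using r0 by (intro tendsto_intros lim) auto
        then have l1: "(\<lambda>i. ennreal (min 1 (norm x ^ 2 / u i ^ 2))) \<longlonglongrightarrow> ennreal (min 1 (norm x ^ 2 / r ^ 2))"
          by (rule tendsto_ennrealI)
        have "0 < min 1 (norm x ^ 2 / r ^ 2)" using False r0 by simp
        then show ?thesis
          by (intro tendsto_mult_ennreal[OF l1 tendsto_const]) auto
      qed
    qed
  qed
  then have "(\<lambda>n. ennreal (hfun TYPE('a) \<nu> (u n))) \<longlonglongrightarrow> ennreal (hfun TYPE('a) \<nu> r)"
    using h_eq[OF adm r0] h_eq[OF adm u0] by simp
  then have "(\<lambda>n. enn2real (ennreal (hfun TYPE('a) \<nu> (u n)))) \<longlonglongrightarrow> hfun TYPE('a) \<nu> r"
    by (rule tendsto_enn2real) (simp add: hfun_def)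
  then show "(\<lambda>n. hfun TYPE('a) \<nu> (u n)) \<longlonglongrightarrow> hfun TYPE('a) \<nu> r"
    by (simp add: hfun_def)
qed

lemma h_nonneg: "0 \<le> hfun T \<nu> r"
  by (simp add: hfun_def)

lemma hinv_prop:
  assumes adm: "admissible_nu TYPE('a::euclidean_space) \<nu>" and u: "0 < u"
    and R: "0 < R" "hfun TYPE('a) \<nu> R \<le> u"
  shows "0 < hinv TYPE('a) \<nu> u \<and> hfun TYPE('a) \<nu> (hinv TYPE('a) \<nu> u) = u"
proof -
  obtain r0 where r0: "0 < r0" "r0 < R" "u \<le> hfun TYPE('a) \<nu> r0" using h_small[OF adm R(1)] by blast
  have "\<exists>x\<ge>r0. x \<le> R \<and> hfun TYPE('a) \<nu> x = u"
    using IVT2'[of "hfun TYPE('a) \<nu>" R u r0, OF R(2) r0(3) less_imp_le[OF r0(2)] h_cont[OF adm r0(1)]] .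
  then obtain r where r': "r0 \<le> r" "hfun TYPE('a) \<nu> r = u" by blast
  then have r: "0 < r" "hfun TYPE('a) \<nu> r = u" using r0 by auto
  have uniq: "r' = r" if "0 < r'" "hfun TYPE('a) \<nu> r' = u" for r'
  proof (rule ccontr)
    assume "r' \<noteq> r"
    then consider "r' < r" | "r < r'" by linarith
    then show False
    proof cases
      case 1 then show ?thesis using h_strict[OF adm that(1) 1] that(2) r(2) by simp
    next
      case 2 then show ?thesis using h_strict[OF adm r(1) 2] that(2) r(2) by simp
    qed
  qed
  have "hinv TYPE('a) \<nu> u = r" unfolding hinv_def
    by (rule the_equality) (use r uniq in blast)+
  then show ?thesis using r by simp
qed

lemma R_exists:
  assumes adm: "admissible_nu TYPE('a::euclidean_space) \<nu>" and th: "0 < \<theta>h"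
    and sc: "\<forall>l r. 0 < l \<and> l \<le> 1 \<and> 0 < r \<and> ereal r < \<theta>h \<longrightarrow>
            hfun TYPE('a) \<nu> r \<le> Ch * l powr \<alpha>h * hfun TYPE('a) \<nu> (l * r)"
    and \<alpha>: "0 < \<alpha>h" and Ch: "1 \<le> Ch"
    and \<tau>: "0 < \<tau>" "ereal \<tau> < inv_h_at TYPE('a) \<nu> \<theta>h"
  shows "\<exists>R>0. hfun TYPE('a) \<nu> R \<le> 1 / \<tau>"
proof (cases "\<theta>h = \<infinity>")
  case True
  define h1 where "h1 = hfun TYPE('a) \<nu> 1"
  have h1: "0 \<le> h1" unfolding h1_def by (rule h_nonneg)
  define X where "X = Ch * h1 * \<tau> + 1"
  have X: "0 < X" unfolding X_def using h1 Ch \<tau> by (simp add: add_nonneg_pos)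
  define R where "R = max 1 (X powr (1/\<alpha>h))"
  have R1: "1 \<le> R" unfolding R_def by simp
  have "X = (X powr (1/\<alpha>h)) powr \<alpha>h" using X \<alpha> by (simp add: powr_powr)
  also have "\<dots> \<le> R powr \<alpha>h" unfolding R_def using \<alpha> by (intro powr_mono2) auto
  finally have XR: "X \<le> R powr \<alpha>h" .
  have Rpos: "0 < R powr \<alpha>h" using R1 by simp
  have "hfun TYPE('a) \<nu> R \<le> Ch * (1/R) powr \<alpha>h * hfun TYPE('a) \<nu> ((1/R) * R)"
    using sc[rule_format, of "1/R" R] R1 True by (simp add: divide_le_eq)
  also have "\<dots> = Ch * h1 / R powr \<alpha>h"
  proof -
    have "(1/R) powr \<alpha>h = 1 / R powr \<alpha>h" using R1 by (simp add: powr_divide)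
    moreover have "(1/R) * R = 1" using R1 by simp
    ultimately show ?thesis unfolding h1_def by simp
  qed
  also have "\<dots> \<le> Ch * h1 / X" using X XR h1 Ch by (intro divide_left_mono) (auto intro: mult_pos_pos less_le_trans)
  also have "\<dots> \<le> 1 / \<tau>"
  proof -
    have "Ch * h1 * \<tau> \<le> X" unfolding X_def by simp
    then have "Ch * h1 \<le> X / \<tau>" using \<tau> by (simp add: le_divide_eq)
    then show ?thesis using X \<tau> by (simp add: divide_le_eq mult.commute)
  qed
  finally show ?thesis using R1 by (intro exI[of _ R]) auto
next
  case False
  then obtain \<theta> where \<theta>: "\<theta>h = ereal \<theta>" using th by (cases \<theta>h) auto
  have "0 < \<theta>" using th \<theta> by simp
  have "\<tau> < 1 / hfun TYPE('a) \<nu> \<theta>" using \<tau> \<theta> unfolding inv_h_at_def by simp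
  then have "0 < hfun TYPE('a) \<nu> \<theta>" using \<tau>
    by (metis divide_le_0_1_iff h_nonneg less_eq_real_def not_le order_less_trans)
  then have "hfun TYPE('a) \<nu> \<theta> < 1 / \<tau>" using \<open>\<tau> < 1 / hfun TYPE('a) \<nu> \<theta>\<close> \<tau>
    by (simp add: field_simps)
  then show ?thesis using \<open>0 < \<theta>\<close> by (intro exI[of _ \<theta>]) auto
qed

lemma r_lt_theta:
  assumes adm: "admissible_nu TYPE('a::euclidean_space) \<nu>" and th: "0 < \<theta>h"
    and \<tau>: "0 < \<tau>" "ereal \<tau> < inv_h_at TYPE('a) \<nu> \<theta>h"
    and r: "0 < r" "hfun TYPE('a) \<nu> r = 1 / \<tau>"
  shows "ereal r < \<theta>h"
proof (cases "\<theta>h = \<infinity>")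
  case True then show ?thesis by simp
next
  case False
  then obtain \<theta> where \<theta>: "\<theta>h = ereal \<theta>" using th by (cases \<theta>h) auto
  have "0 < \<theta>" using th \<theta> by simp
  have "\<tau> < 1 / hfun TYPE('a) \<nu> \<theta>" using \<tau> \<theta> unfolding inv_h_at_def by simp
  then have "0 < hfun TYPE('a) \<nu> \<theta>" using \<tau>
    by (metis divide_le_0_1_iff h_nonneg less_eq_real_def not_le order_less_trans)
  then have "hfun TYPE('a) \<nu> \<theta> < 1 / \<tau>" using \<open>\<tau> < 1 / hfun TYPE('a) \<nu> \<theta>\<close> \<tau>
    by (simp add: field_simps)
  have "r < \<theta>"
  proof (rule ccontr)
    assume "\<not> r < \<theta>"
    then have "hfun TYPE('a) \<nu> r \<le> hfun TYPE('a) \<nu> \<theta>" using h_mono[OF adm \<open>0 < \<theta>\<close>, of r] by simp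
    then show False using \<open>hfun TYPE('a) \<nu> \<theta> < 1 / \<tau>\<close> r by simp
  qed
  then show ?thesis using \<theta> by simp
qed

definition Jf :: "'a::euclidean_space itself \<Rightarrow> (real \<Rightarrow> ennreal) \<Rightarrow> real \<Rightarrow> ennreal" where
  "Jf T \<nu> r = (\<integral>\<^sup>+ x. indicator {x. norm x < r} x * ennreal (norm x ^ 2) * \<nu> (norm x) \<partial>(lborel :: 'a measure))"

definition Ifn :: "'a::euclidean_space itself \<Rightarrow> (real \<Rightarrow> ennreal) \<Rightarrow> real \<Rightarrow> ennreal" where
  "Ifn T \<nu> r = (\<integral>\<^sup>+ x. indicator {x. norm x < 1} x * ennreal (norm x ^ 2) * \<nu> (norm (r *\<^sub>R x)) \<partial>(lborel :: 'a measure))"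

lemma J_scale:
  assumes adm: "admissible_nu TYPE('a::euclidean_space) \<nu>" and r: "0 < r"
  shows "Jf TYPE('a) \<nu> r = ennreal (r ^ (DIM('a) + 2)) * Ifn TYPE('a) \<nu> r"
proof -
  have [measurable]: "(\<lambda>x::'a. \<nu> (norm x)) \<in> borel_measurable borel" by (rule adm_meas[OF adm])
  have "Jf TYPE('a) \<nu> r = ennreal (r ^ DIM('a)) *
      (\<integral>\<^sup>+ x. indicator {x. norm x < r} (r *\<^sub>R x) * ennreal (norm (r *\<^sub>R x) ^ 2) * \<nu> (norm (r *\<^sub>R x)) \<partial>(lborel :: 'a measure))"
    unfolding Jf_def by (rule nn_integral_scale) (use r in auto)
  also have "(\<integral>\<^sup>+ x. indicator {x. norm x < r} (r *\<^sub>R x) * ennreal (norm (r *\<^sub>R x) ^ 2) * \<nu> (norm (r *\<^sub>R x)) \<partial>(lborel :: 'a measure))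
     = (\<integral>\<^sup>+ x. ennreal (r^2) * (indicator {x. norm x < 1} x * ennreal (norm x ^ 2) * \<nu> (norm (r *\<^sub>R x))) \<partial>(lborel :: 'a measure))"
  proof (intro nn_integral_cong)
    fix x :: 'a
    have "norm (r *\<^sub>R x) < r \<longleftrightarrow> norm x < 1" using r by simp
    moreover have "ennreal (norm (r *\<^sub>R x) ^ 2) = ennreal (r^2) * ennreal (norm x ^ 2)"
      using r by (simp add: ennreal_mult[symmetric] power_mult_distrib)
    ultimately show "indicator {x. norm x < r} (r *\<^sub>R x) * ennreal (norm (r *\<^sub>R x) ^ 2) * \<nu> (norm (r *\<^sub>R x))
      = ennreal (r^2) * (indicator {x. norm x < 1} x * ennreal (norm x ^ 2) * \<nu> (norm (r *\<^sub>R x)))"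
      by (simp add: indicator_def mult_ac)
  qed
  also have "\<dots> = ennreal (r^2) * Ifn TYPE('a) \<nu> r"
    unfolding Ifn_def by (rule nn_integral_cmult) measurable
  finally have "Jf TYPE('a) \<nu> r = ennreal (r ^ DIM('a)) * (ennreal (r^2) * Ifn TYPE('a) \<nu> r)" .
  moreover have "ennreal (r ^ (DIM('a)+2)) = ennreal (r^DIM('a)) * ennreal (r^2)"
    by (subst power_add) (rule ennreal_mult; use r in simp)
  ultimately show ?thesis by (simp only: mult.assoc)
qed

lemma I_anti:
  assumes adm: "admissible_nu TYPE('a::euclidean_space) \<nu>" and r: "0 < r1" "r1 \<le> r2"
  shows "Ifn TYPE('a) \<nu> r2 \<le> Ifn TYPE('a) \<nu> r1"
  unfolding Ifn_def
proof (intro nn_integral_mono mult_left_mono)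
  fix x :: 'a
  show "\<nu> (norm (r2 *\<^sub>R x)) \<le> \<nu> (norm (r1 *\<^sub>R x))"
    using r by (intro adm_mono[OF adm]) (auto intro: mult_right_mono)
qed simp

lemma J_mono:
  assumes "r1 \<le> r2"
  shows "Jf TYPE('a::euclidean_space) \<nu> r1 \<le> Jf TYPE('a) \<nu> r2"
  unfolding Jf_def
  by (intro nn_integral_mono mult_right_mono) (use assms in \<open>auto simp: indicator_def\<close>)

lemma J_fin': "admissible_nu TYPE('a::euclidean_space) \<nu> \<Longrightarrow> 0 < r \<Longrightarrow> Jf TYPE('a) \<nu> r < \<infinity>"
  unfolding Jf_def by (rule J_fin)

lemma I_fin:
  assumes adm: "admissible_nu TYPE('a::euclidean_space) \<nu>" and r: "0 < r"
  shows "Ifn TYPE('a) \<nu> r < \<infinity>"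
  using J_fin'[OF adm r] J_scale[OF adm r] r by (cases "Ifn TYPE('a) \<nu> r = 0") (auto simp: ennreal_mult_less_top)

lemma K_I:
  assumes adm: "admissible_nu TYPE('a::euclidean_space) \<nu>" and r: "0 < r"
  shows "Kfun TYPE('a) \<nu> r / r ^ DIM('a) = enn2real (Ifn TYPE('a) \<nu> r)"
proof -
  have "Kfun TYPE('a) \<nu> r = enn2real (Jf TYPE('a) \<nu> r) / r^2" unfolding Kfun_def Jf_def ..
  also have "enn2real (Jf TYPE('a) \<nu> r) = r ^ (DIM('a)+2) * enn2real (Ifn TYPE('a) \<nu> r)"
    unfolding J_scale[OF adm r] enn2real_mult using r by simp
  finally have "Kfun TYPE('a) \<nu> r = (r ^ DIM('a) * enn2real (Ifn TYPE('a) \<nu> r)) * r^2 / r^2"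
    by (simp only: power_add mult_ac)
  also have "\<dots> = r ^ DIM('a) * enn2real (Ifn TYPE('a) \<nu> r)" using r by simp
  finally show ?thesis using r by simp
qed

lemma K_compare:
  assumes adm: "admissible_nu TYPE('a::euclidean_space) \<nu>" and R: "0 < R" "R / 2 \<le> \<rho>"
  shows "Kfun TYPE('a) \<nu> \<rho> / \<rho> ^ DIM('a) \<le> 2 ^ (DIM('a) + 2) * (Kfun TYPE('a) \<nu> R / R ^ DIM('a))"
proof -
  define d where "d = DIM('a) + 2"
  have R2: "0 < R / 2" using R by simp
  have \<rho>: "0 < \<rho>" using R by simp
  have "enn2real (Ifn TYPE('a) \<nu> \<rho>) \<le> enn2real (Ifn TYPE('a) \<nu> (R/2))"
    by (rule enn2real_mono[OF I_anti[OF adm R2 R(2)]]) (use I_fin[OF adm R2] in simp)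
  also have "\<dots> \<le> 2 ^ d * enn2real (Ifn TYPE('a) \<nu> R)"
  proof -
    have "enn2real (Jf TYPE('a) \<nu> (R/2)) \<le> enn2real (Jf TYPE('a) \<nu> R)"
      by (rule enn2real_mono[OF J_mono]) (use J_fin'[OF adm R(1)] R in auto)
    then have "(R/2) ^ d * enn2real (Ifn TYPE('a) \<nu> (R/2)) \<le> R ^ d * enn2real (Ifn TYPE('a) \<nu> R)"
      using R R2 unfolding d_def by (simp add: J_scale[OF adm R(1)] J_scale[OF adm R2] enn2real_mult)
    then have "R ^ d * enn2real (Ifn TYPE('a) \<nu> (R/2)) \<le> R ^ d * (2 ^ d * enn2real (Ifn TYPE('a) \<nu> R))"
      by (simp add: power_divide field_simps)
    then show ?thesis using R by simp
  qed
  finally show ?thesis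
    using K_I[OF adm \<rho>] K_I[OF adm R(1)] unfolding d_def by simp
qed

lemma rho_le_A: "rho \<nu> t (x::'a::euclidean_space) \<le> inverse (hinv TYPE('a) \<nu> (1 / t) ^ DIM('a))"
  unfolding rho_def by auto

lemma rho_le_B: "x \<noteq> 0 \<Longrightarrow> rho \<nu> t (x::'a::euclidean_space) \<le> t * Kfun TYPE('a) \<nu> (norm x) / norm x ^ DIM('a)"
  unfolding rho_def by auto

lemma K_nonneg: "0 \<le> Kfun T \<nu> r"
  unfolding Kfun_def by simp

definition lamc :: "real \<Rightarrow> real \<Rightarrow> real" where
  "lamc \<alpha>h Ch = (4 * Ch) powr (-1 / \<alpha>h)"

lemma lamc_props:
  assumes \<alpha>: "0 < \<alpha>h" and Ch: "1 \<le> Ch"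
  shows "0 < lamc \<alpha>h Ch" "lamc \<alpha>h Ch \<le> 1" "Ch * lamc \<alpha>h Ch powr \<alpha>h = 1/4"
proof -
  show "0 < lamc \<alpha>h Ch" unfolding lamc_def using Ch by simp
  have "(4 * Ch) powr (-1 / \<alpha>h) \<le> (4 * Ch) powr 0"
    using \<alpha> Ch by (intro powr_mono) auto
  then show "lamc \<alpha>h Ch \<le> 1" unfolding lamc_def using Ch by simp
  have "lamc \<alpha>h Ch powr \<alpha>h = (4 * Ch) powr (-1 / \<alpha>h * \<alpha>h)" unfolding lamc_def by (simp add: powr_powr)
  also have "\<dots> = (4 * Ch) powr (-1)" using \<alpha> by simp
  also have "\<dots> = 1 / (4 * Ch)" using Ch by (simp add: powr_minus inverse_eq_divide)
  finally show "Ch * lamc \<alpha>h Ch powr \<alpha>h = 1/4" using Ch by simp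
qed

lemma A_bound:
  assumes adm: "admissible_nu TYPE('a::euclidean_space) \<nu>" and th: "0 < \<theta>h"
    and sc: "\<forall>l r. 0 < l \<and> l \<le> 1 \<and> 0 < r \<and> ereal r < \<theta>h \<longrightarrow>
            hfun TYPE('a) \<nu> r \<le> Ch * l powr \<alpha>h * hfun TYPE('a) \<nu> (l * r)"
    and \<alpha>: "0 < \<alpha>h" and Ch: "1 \<le> Ch"
    and st: "0 < t" "t \<le> s" "ereal (s + t) < inv_h_at TYPE('a) \<nu> \<theta>h"
  shows "inverse (hinv TYPE('a) \<nu> (1 / s) ^ DIM('a))
     \<le> inverse (lamc \<alpha>h Ch ^ DIM('a)) * inverse (hinv TYPE('a) \<nu> (1 / (s + t)) ^ DIM('a))"
proof -
  define lam where "lam = lamc \<alpha>h Ch"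
  have lam: "0 < lam" "lam \<le> 1" "Ch * lam powr \<alpha>h = 1/4" unfolding lam_def using lamc_props[OF \<alpha> Ch] by auto
  have s: "0 < s" using st by simp
  have spt: "0 < s + t" using st by simp
  obtain R where R: "0 < R" "hfun TYPE('a) \<nu> R \<le> 1 / (s + t)"
    using R_exists[OF adm th sc \<alpha> Ch spt st(3)] by blast
  have R2: "hfun TYPE('a) \<nu> R \<le> 1 / s"
  proof -
    have "1 / (s + t) \<le> 1 / s" by (rule divide_left_mono) (use st in auto)
    then show ?thesis using R(2) by linarith
  qed
  define r where "r = hinv TYPE('a) \<nu> (1 / (s + t))"
  define r' where "r' = hinv TYPE('a) \<nu> (1 / s)"
  have r: "0 < r" "hfun TYPE('a) \<nu> r = 1 / (s + t)"
    unfolding r_def using hinv_prop[OF adm _ R] spt by auto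
  have r': "0 < r'" "hfun TYPE('a) \<nu> r' = 1 / s"
    unfolding r'_def using hinv_prop[OF adm _ R(1) R2] s by auto
  have rth: "ereal r < \<theta>h" by (rule r_lt_theta[OF adm th spt st(3) r])
  have sc1: "hfun TYPE('a) \<nu> r \<le> Ch * lam powr \<alpha>h * hfun TYPE('a) \<nu> (lam * r)"
    by (rule sc[rule_format]) (use lam r rth in auto)
  then have sc2: "hfun TYPE('a) \<nu> r \<le> hfun TYPE('a) \<nu> (lam * r) / 4" using lam(3) by simp
  have lr: "lam * r \<le> r'"
  proof (rule ccontr)
    assume "\<not> lam * r \<le> r'"
    then have "hfun TYPE('a) \<nu> (lam * r) \<le> hfun TYPE('a) \<nu> r'" using h_mono[OF adm r'(1)] by simp
    moreover have "1 / s \<le> 2 / (s + t)" using st s by (simp add: field_simps)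
    moreover have "hfun TYPE('a) \<nu> r * 4 \<le> hfun TYPE('a) \<nu> (lam * r)" using sc2 by simp
    ultimately have "hfun TYPE('a) \<nu> r * 4 \<le> 2 / (s + t)" using r' by linarith
    then show False using r(2) spt by (simp add: field_simps)
  qed
  have "(lam * r) ^ DIM('a) \<le> r' ^ DIM('a)" using lr lam r by (intro power_mono) auto
  then have "inverse (r' ^ DIM('a)) \<le> inverse ((lam * r) ^ DIM('a))"
    using lam r by (intro le_imp_inverse_le) auto
  then show ?thesis unfolding r_def[symmetric] r'_def[symmetric] lam_def[symmetric]
    by (simp add: power_mult_distrib)
qed

lemma g_bound:
  assumes sg: "\<forall>l t. 0 < l \<and> l \<le> 1 \<and> 0 < t \<and> ereal t < \<theta>g \<longrightarrow> l powr \<alpha>g * g (l * t) \<le> cg * g t"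
    and gpos: "\<forall>t. 0 < t \<longrightarrow> 0 < g t" and \<alpha>g: "\<alpha>g \<le> 1"
    and u: "0 < u" "u \<le> T" "ereal T < \<theta>g"
  shows "u * g u \<le> cg * T * g T"
proof -
  define l where "l = u / T"
  have T: "0 < T" using u by simp
  have l: "0 < l" "l \<le> 1" unfolding l_def using u T by auto
  have lT: "l * T = u" unfolding l_def using T by simp
  have "l powr 1 \<le> l powr \<alpha>g" using l \<alpha>g by (intro powr_mono') auto
  then have "l \<le> l powr \<alpha>g" using l by simp
  then have "l * g u \<le> l powr \<alpha>g * g u" using gpos u by (intro mult_right_mono) auto
  also have "\<dots> \<le> cg * g T" using sg[rule_format, of l T] l T u lT by simp
  finally have ineq: "l * g u * T \<le> cg * g T * T" using T by (intro mult_right_mono) auto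
  have eq: "l * g u * T = u * g u" unfolding lT[symmetric] by (simp add: mult_ac)
  have "u * g u \<le> cg * g T * T" using ineq unfolding eq .
  then show ?thesis by (simp add: mult_ac)
qed

definition Cc :: "'a::euclidean_space itself \<Rightarrow> real \<Rightarrow> real \<Rightarrow> real \<Rightarrow> real" where
  "Cc T \<alpha>h Ch cg = max (2 * cg * inverse (lamc \<alpha>h Ch ^ DIM('a))) (cg * 2 ^ (DIM('a) + 2))"

lemma B_part:
  assumes adm: "admissible_nu TYPE('a::euclidean_space) \<nu>"
    and sg: "\<forall>l t. 0 < l \<and> l \<le> 1 \<and> 0 < t \<and> ereal t < \<theta>g \<longrightarrow> l powr \<alpha>g * g (l * t) \<le> cg * g t"
    and gpos: "\<forall>t. 0 < t \<longrightarrow> 0 < g t" and \<alpha>g: "\<alpha>g \<le> 1"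
    and u: "0 < u" "u \<le> T" "ereal T < \<theta>g"
    and w: "w \<noteq> 0" "norm w / 2 \<le> norm (z::'a)"
  shows "g u * rho \<nu> u z \<le> cg * 2 ^ (DIM('a) + 2) * g T * (T * Kfun TYPE('a) \<nu> (norm w) / norm w ^ DIM('a))"
proof -
  have nw: "0 < norm w" using w by simp
  then have z: "z \<noteq> 0" using w by auto
  have gu: "0 < g u" using gpos u by simp
  have K1: "0 \<le> Kfun TYPE('a) \<nu> (norm z) / norm z ^ DIM('a)" by (simp add: K_nonneg)
  have K2: "Kfun TYPE('a) \<nu> (norm z) / norm z ^ DIM('a) \<le> 2 ^ (DIM('a) + 2) * (Kfun TYPE('a) \<nu> (norm w) / norm w ^ DIM('a))"
    by (rule K_compare[OF adm nw w(2)])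
  have gb: "u * g u \<le> cg * T * g T" by (rule g_bound[OF sg gpos \<alpha>g u])
  have "g u * rho \<nu> u z \<le> g u * (u * Kfun TYPE('a) \<nu> (norm z) / norm z ^ DIM('a))"
    using rho_le_B[OF z] gu by (intro mult_left_mono) auto
  also have "\<dots> = (u * g u) * (Kfun TYPE('a) \<nu> (norm z) / norm z ^ DIM('a))" by (simp add: mult_ac)
  also have "\<dots> \<le> (cg * T * g T) * (2 ^ (DIM('a) + 2) * (Kfun TYPE('a) \<nu> (norm w) / norm w ^ DIM('a)))"
  proof (rule mult_mono[OF gb K2])
    have "0 < u * g u" using u gu by simp
    then show "0 \<le> cg * T * g T" using gb by linarith
  qed (rule K1)
  also have "\<dots> = cg * 2 ^ (DIM('a) + 2) * g T * (T * Kfun TYPE('a) \<nu> (norm w) / norm w ^ DIM('a))"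
    by (simp add: mult_ac)
  finally show ?thesis .
qed

lemma main_ordered:
  fixes x y :: "'a::euclidean_space"
  assumes adm: "admissible_nu TYPE('a) \<nu>" and th: "0 < \<theta>h"
    and sc: "\<forall>l r. 0 < l \<and> l \<le> 1 \<and> 0 < r \<and> ereal r < \<theta>h \<longrightarrow>
            hfun TYPE('a) \<nu> r \<le> Ch * l powr \<alpha>h * hfun TYPE('a) \<nu> (l * r)"
    and \<alpha>: "0 < \<alpha>h" and Ch: "1 \<le> Ch"
    and sg: "\<forall>l t. 0 < l \<and> l \<le> 1 \<and> 0 < t \<and> ereal t < \<theta>g \<longrightarrow> l powr \<alpha>g * g (l * t) \<le> cg * g t"
    and gpos: "\<forall>t. 0 < t \<longrightarrow> 0 < g t" and \<alpha>g: "\<alpha>g \<le> 1" and cg: "1 \<le> cg"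
    and st: "0 < t" "t \<le> s" "ereal (s + t) < min (inv_h_at TYPE('a) \<nu> \<theta>h) \<theta>g"
  shows "min (g s * rho \<nu> s x) (g t * rho \<nu> t y) \<le> Cc TYPE('a) \<alpha>h Ch cg * g (s + t) * rho \<nu> (s + t) (x + y)"
proof -
  define C where "C = Cc TYPE('a) \<alpha>h Ch cg"
  define G where "G = g (s + t)"
  define M where "M = min (g s * rho \<nu> s x) (g t * rho \<nu> t y)"
  define A where "A = inverse (hinv TYPE('a) \<nu> (1 / (s + t)) ^ DIM('a))"
  define B where "B = (s + t) * Kfun TYPE('a) \<nu> (norm (x + y)) / norm (x + y) ^ DIM('a)"
  have s: "0 < s" using st by simp
  have spt: "0 < s + t" using st by simp
  have st1: "ereal (s + t) < inv_h_at TYPE('a) \<nu> \<theta>h" and st2: "ereal (s + t) < \<theta>g" using st by auto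
  have G: "0 < G" unfolding G_def using gpos spt by simp
  have gs: "0 < g s" using gpos s by simp
  obtain R where R: "0 < R" "hfun TYPE('a) \<nu> R \<le> 1 / (s + t)"
    using R_exists[OF adm th sc \<alpha> Ch spt st1] by blast
  have R2: "hfun TYPE('a) \<nu> R \<le> 1 / s"
  proof -
    have "1 / (s + t) \<le> 1 / s" by (rule divide_left_mono) (use st in auto)
    then show ?thesis using R(2) by linarith
  qed
  have hr: "0 < hinv TYPE('a) \<nu> (1 / (s + t))" using hinv_prop[OF adm _ R] spt by auto
  have hr': "0 < hinv TYPE('a) \<nu> (1 / s)" using hinv_prop[OF adm _ R(1) R2] s by auto
  have A: "0 \<le> A" unfolding A_def using hr by simp
  have As: "0 \<le> inverse (hinv TYPE('a) \<nu> (1 / s) ^ DIM('a))" using hr' by simp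
  have lam: "0 < lamc \<alpha>h Ch" using lamc_props[OF \<alpha> Ch] by simp
  have C1: "2 * cg * inverse (lamc \<alpha>h Ch ^ DIM('a)) \<le> C" unfolding C_def Cc_def by simp
  have C2: "cg * 2 ^ (DIM('a) + 2) \<le> C" unfolding C_def Cc_def by simp
  have C0: "0 \<le> C" using C2 cg by (smt (verit) zero_le_power zero_le_mult_iff)
  have gsb: "g s \<le> 2 * cg * G"
  proof -
    have "s * g s \<le> cg * (s + t) * G" unfolding G_def by (rule g_bound[OF sg gpos \<alpha>g s _ st2]) (use st in simp)
    also have "\<dots> \<le> cg * (2 * s) * G"
    proof -
      have "(s + t) * (cg * G) \<le> (2 * s) * (cg * G)" by (rule mult_right_mono) (use st cg G in auto)
      then show ?thesis by (simp add: mult_ac)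
    qed
    finally have "s * g s \<le> s * (2 * cg * G)" by (simp add: mult_ac)
    then show ?thesis using s by simp
  qed
  have Ab: "inverse (hinv TYPE('a) \<nu> (1 / s) ^ DIM('a)) \<le> inverse (lamc \<alpha>h Ch ^ DIM('a)) * A"
    unfolding A_def by (rule A_bound[OF adm th sc \<alpha> Ch st(1,2) st1])
  have MA: "M \<le> C * G * A"
  proof -
    have "M \<le> g s * rho \<nu> s x" unfolding M_def by simp
    also have "\<dots> \<le> g s * inverse (hinv TYPE('a) \<nu> (1 / s) ^ DIM('a))"
      using gs rho_le_A by (intro mult_left_mono) auto
    also have "\<dots> \<le> (2 * cg * G) * (inverse (lamc \<alpha>h Ch ^ DIM('a)) * A)"
      using gsb Ab gs As G cg by (intro mult_mono) auto
    also have "\<dots> = (2 * cg * inverse (lamc \<alpha>h Ch ^ DIM('a))) * (G * A)" by (simp add: mult_ac)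
    also have "\<dots> \<le> C * (G * A)" using C1 G A by (intro mult_right_mono) auto
    finally show ?thesis by (simp add: mult_ac)
  qed
  show ?thesis
  proof (cases "x + y = 0")
    case True
    then have "rho \<nu> (s + t) (x + y) = A" unfolding rho_def A_def by simp
    then show ?thesis using MA unfolding M_def C_def G_def by simp
  next
    case False
    have rho_eq: "rho \<nu> (s + t) (x + y) = min A B" unfolding rho_def A_def B_def using False by simp
    have B0: "0 \<le> B" unfolding B_def using spt by (simp add: K_nonneg)
    have MB: "M \<le> C * G * B"
    proof -
      have "norm (x + y) \<le> norm x + norm y" by (rule norm_triangle_ineq)
      then consider "norm (x + y) / 2 \<le> norm x" | "norm (x + y) / 2 \<le> norm y" by linarith
      then have "M \<le> cg * 2 ^ (DIM('a) + 2) * G * B"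
      proof cases
        case 1
        have "M \<le> g s * rho \<nu> s x" unfolding M_def by simp
        also have "\<dots> \<le> cg * 2 ^ (DIM('a) + 2) * G * B"
          unfolding G_def B_def by (rule B_part[OF adm sg gpos \<alpha>g s _ st2 False 1]) (use st in simp)
        finally show ?thesis .
      next
        case 2
        have "M \<le> g t * rho \<nu> t y" unfolding M_def by simp
        also have "\<dots> \<le> cg * 2 ^ (DIM('a) + 2) * G * B"
          unfolding G_def B_def by (rule B_part[OF adm sg gpos \<alpha>g st(1) _ st2 False 2]) (use s in simp)
        finally show ?thesis .
      qed
      also have "\<dots> \<le> C * G * B" using C2 G B0 by (intro mult_right_mono) auto
      finally show ?thesis .
    qed
    have "M \<le> C * G * min A B"
      using MA MB by (cases "A \<le> B") (auto simp: min_def)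
    then show ?thesis unfolding rho_eq M_def C_def G_def .
  qed
qed

theorem mainTheorem15:
  shows
  "(\<forall>\<alpha>h Ch \<alpha>g cg :: real. 0 < \<alpha>h \<and> \<alpha>h \<le> 2 \<and> 1 \<le> Ch \<and> \<alpha>g \<le> 1 \<and> 1 \<le> cg \<longrightarrow>
     (\<exists>c :: real. \<forall>(\<nu> :: real \<Rightarrow> ennreal) (\<theta>h :: ereal) (g :: real \<Rightarrow> real) (\<theta>g :: ereal).
        admissible_nu TYPE('a::euclidean_space) \<nu> \<and> 0 < \<theta>h \<and>
        (\<forall>l r. 0 < l \<and> l \<le> 1 \<and> 0 < r \<and> ereal r < \<theta>h \<longrightarrow>
            hfun TYPE('a) \<nu> r \<le> Ch * l powr \<alpha>h * hfun TYPE('a) \<nu> (l * r)) \<and>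
        (\<forall>t. 0 < t \<longrightarrow> 0 < g t) \<and>
        (\<forall>a b. 0 < a \<and> a \<le> b \<longrightarrow> g b \<le> g a) \<and>
        0 < \<theta>g \<and>
        (\<forall>l t. 0 < l \<and> l \<le> 1 \<and> 0 < t \<and> ereal t < \<theta>g \<longrightarrow>
            l powr \<alpha>g * g (l * t) \<le> cg * g t)
        \<longrightarrow>
        (\<forall>s t (x :: 'a) y. 0 < s \<and> 0 < t \<and>
            ereal (s + t) < min (inv_h_at TYPE('a) \<nu> \<theta>h) \<theta>g \<longrightarrow>
            min (g s * rho \<nu> s x) (g t * rho \<nu> t y) \<le> c * g (s + t) * rho \<nu> (s + t) (x + y))))
   \<and>
   (\<forall>\<alpha>h Ch :: real. 0 < \<alpha>h \<and> \<alpha>h \<le> 2 \<and> 1 \<le> Ch \<longrightarrow>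
     (\<exists>c :: real. \<forall>(\<nu> :: real \<Rightarrow> ennreal) (\<theta>h :: ereal).
        admissible_nu TYPE('a) \<nu> \<and> 0 < \<theta>h \<and>
        (\<forall>l r. 0 < l \<and> l \<le> 1 \<and> 0 < r \<and> ereal r < \<theta>h \<longrightarrow>
            hfun TYPE('a) \<nu> r \<le> Ch * l powr \<alpha>h * hfun TYPE('a) \<nu> (l * r))
        \<longrightarrow>
        (\<forall>s t (x :: 'a) y. 0 < s \<and> 0 < t \<and> ereal (s + t) < inv_h_at TYPE('a) \<nu> \<theta>h \<longrightarrow>
            min (rho \<nu> s x) (rho \<nu> t y) \<le> c * rho \<nu> (s + t) (x + y))))"
  (is "?P1 \<and> ?P2")
proof -
  have P1: ?P1
  proof (intro allI impI)
    fix \<alpha>h Ch \<alpha>g cg :: real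
    assume H: "0 < \<alpha>h \<and> \<alpha>h \<le> 2 \<and> 1 \<le> Ch \<and> \<alpha>g \<le> 1 \<and> 1 \<le> cg"
    show "\<exists>c :: real. \<forall>(\<nu> :: real \<Rightarrow> ennreal) (\<theta>h :: ereal) (g :: real \<Rightarrow> real) (\<theta>g :: ereal).
        admissible_nu TYPE('a::euclidean_space) \<nu> \<and> 0 < \<theta>h \<and>
        (\<forall>l r. 0 < l \<and> l \<le> 1 \<and> 0 < r \<and> ereal r < \<theta>h \<longrightarrow>
            hfun TYPE('a) \<nu> r \<le> Ch * l powr \<alpha>h * hfun TYPE('a) \<nu> (l * r)) \<and>
        (\<forall>t. 0 < t \<longrightarrow> 0 < g t) \<and>
        (\<forall>a b. 0 < a \<and> a \<le> b \<longrightarrow> g b \<le> g a) \<and>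
        0 < \<theta>g \<and>
        (\<forall>l t. 0 < l \<and> l \<le> 1 \<and> 0 < t \<and> ereal t < \<theta>g \<longrightarrow>
            l powr \<alpha>g * g (l * t) \<le> cg * g t)
        \<longrightarrow>
        (\<forall>s t (x :: 'a) y. 0 < s \<and> 0 < t \<and>
            ereal (s + t) < min (inv_h_at TYPE('a) \<nu> \<theta>h) \<theta>g \<longrightarrow>
            min (g s * rho \<nu> s x) (g t * rho \<nu> t y) \<le> c * g (s + t) * rho \<nu> (s + t) (x + y))"
    proof (intro exI[of _ "Cc TYPE('a) \<alpha>h Ch cg"] allI impI)
      fix \<nu> \<theta>h g \<theta>g s t and x y :: 'a
      assume hyp: "admissible_nu TYPE('a::euclidean_space) \<nu> \<and> 0 < \<theta>h \<and>
        (\<forall>l r. 0 < l \<and> l \<le> 1 \<and> 0 < r \<and> ereal r < \<theta>h \<longrightarrow>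
            hfun TYPE('a) \<nu> r \<le> Ch * l powr \<alpha>h * hfun TYPE('a) \<nu> (l * r)) \<and>
        (\<forall>t. 0 < t \<longrightarrow> 0 < g t) \<and>
        (\<forall>a b. 0 < a \<and> a \<le> b \<longrightarrow> g b \<le> g a) \<and>
        0 < \<theta>g \<and>
        (\<forall>l t. 0 < l \<and> l \<le> 1 \<and> 0 < t \<and> ereal t < \<theta>g \<longrightarrow>
            l powr \<alpha>g * g (l * t) \<le> cg * g t)"
        and st: "0 < s \<and> 0 < t \<and> ereal (s + t) < min (inv_h_at TYPE('a) \<nu> \<theta>h) \<theta>g"
      from hyp have adm: "admissible_nu TYPE('a) \<nu>" and th: "0 < \<theta>h"
        and sc: "\<forall>l r. 0 < l \<and> l \<le> 1 \<and> 0 < r \<and> ereal r < \<theta>h \<longrightarrow>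
            hfun TYPE('a) \<nu> r \<le> Ch * l powr \<alpha>h * hfun TYPE('a) \<nu> (l * r)"
        and gpos: "\<forall>t. 0 < t \<longrightarrow> 0 < g t"
        and sg: "\<forall>l t. 0 < l \<and> l \<le> 1 \<and> 0 < t \<and> ereal t < \<theta>g \<longrightarrow> l powr \<alpha>g * g (l * t) \<le> cg * g t"
        by auto
      from H have \<alpha>: "0 < \<alpha>h" and Ch: "1 \<le> Ch" and \<alpha>g: "\<alpha>g \<le> 1" and cg: "1 \<le> cg" by auto
      show "min (g s * rho \<nu> s x) (g t * rho \<nu> t y) \<le> Cc TYPE('a) \<alpha>h Ch cg * g (s + t) * rho \<nu> (s + t) (x + y)"
      proof (cases "t \<le> s")
        case True
        then show ?thesis using main_ordered[OF adm th sc \<alpha> Ch sg gpos \<alpha>g cg, of t s x y] st by auto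
      next
        case False
        then have "t \<ge> s" by simp
        then have "min (g t * rho \<nu> t y) (g s * rho \<nu> s x) \<le> Cc TYPE('a) \<alpha>h Ch cg * g (t + s) * rho \<nu> (t + s) (y + x)"
          using main_ordered[OF adm th sc \<alpha> Ch sg gpos \<alpha>g cg, of s t y x] st by (auto simp: add.commute)
        then show ?thesis by (simp add: add.commute min.commute)
      qed
    qed
  qed
  have P2: ?P2
  proof (intro allI impI)
    fix \<alpha>h Ch :: real
    assume H: "0 < \<alpha>h \<and> \<alpha>h \<le> 2 \<and> 1 \<le> Ch"
    then have H': "0 < \<alpha>h \<and> \<alpha>h \<le> 2 \<and> 1 \<le> Ch \<and> (0::real) \<le> 1 \<and> 1 \<le> (1::real)" by simp
    have "\<exists>c. \<forall>(\<nu> :: real \<Rightarrow> ennreal) (\<theta>h :: ereal) (g :: real \<Rightarrow> real) (\<theta>g :: ereal).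
        admissible_nu TYPE('a::euclidean_space) \<nu> \<and> 0 < \<theta>h \<and>
        (\<forall>l r. 0 < l \<and> l \<le> 1 \<and> 0 < r \<and> ereal r < \<theta>h \<longrightarrow>
            hfun TYPE('a) \<nu> r \<le> Ch * l powr \<alpha>h * hfun TYPE('a) \<nu> (l * r)) \<and>
        (\<forall>t. 0 < t \<longrightarrow> 0 < g t) \<and>
        (\<forall>a b. 0 < a \<and> a \<le> b \<longrightarrow> g b \<le> g a) \<and>
        0 < \<theta>g \<and>
        (\<forall>l t. 0 < l \<and> l \<le> 1 \<and> 0 < t \<and> ereal t < \<theta>g \<longrightarrow>
            l powr 0 * g (l * t) \<le> 1 * g t)
        \<longrightarrow>
        (\<forall>s t (x :: 'a) y. 0 < s \<and> 0 < t \<and>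
            ereal (s + t) < min (inv_h_at TYPE('a) \<nu> \<theta>h) \<theta>g \<longrightarrow>
            min (g s * rho \<nu> s x) (g t * rho \<nu> t y) \<le> c * g (s + t) * rho \<nu> (s + t) (x + y))" (is "\<exists>c. ?Q c")
      by (rule P1[rule_format, OF H'])
    then obtain c where c: "?Q c" ..
    show "\<exists>c :: real. \<forall>(\<nu> :: real \<Rightarrow> ennreal) (\<theta>h :: ereal).
        admissible_nu TYPE('a) \<nu> \<and> 0 < \<theta>h \<and>
        (\<forall>l r. 0 < l \<and> l \<le> 1 \<and> 0 < r \<and> ereal r < \<theta>h \<longrightarrow>
            hfun TYPE('a) \<nu> r \<le> Ch * l powr \<alpha>h * hfun TYPE('a) \<nu> (l * r))
        \<longrightarrow>
        (\<forall>s t (x :: 'a) y. 0 < s \<and> 0 < t \<and> ereal (s + t) < inv_h_at TYPE('a) \<nu> \<theta>h \<longrightarrow>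
            min (rho \<nu> s x) (rho \<nu> t y) \<le> c * rho \<nu> (s + t) (x + y))"
    proof (intro exI[of _ c] allI impI)
      fix \<nu> \<theta>h s t and x y :: 'a
      assume hyp: "admissible_nu TYPE('a) \<nu> \<and> 0 < \<theta>h \<and>
        (\<forall>l r. 0 < l \<and> l \<le> 1 \<and> 0 < r \<and> ereal r < \<theta>h \<longrightarrow>
            hfun TYPE('a) \<nu> r \<le> Ch * l powr \<alpha>h * hfun TYPE('a) \<nu> (l * r))"
        and st: "0 < s \<and> 0 < t \<and> ereal (s + t) < inv_h_at TYPE('a) \<nu> \<theta>h"
      have g1: "\<forall>l t. 0 < l \<and> l \<le> 1 \<and> 0 < t \<and> ereal t < \<infinity> \<longrightarrow>
            l powr 0 * (\<lambda>_. 1::real) (l * t) \<le> 1 * (\<lambda>_. 1) t" by simp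
      have "min ((\<lambda>_. 1::real) s * rho \<nu> s x) ((\<lambda>_. 1::real) t * rho \<nu> t y) \<le> c * (\<lambda>_. 1::real) (s + t) * rho \<nu> (s + t) (x + y)"
        using c[rule_format, of \<nu> \<theta>h "\<lambda>_. 1" \<infinity> s t x y] hyp st g1 by simp
      then show "min (rho \<nu> s x) (rho \<nu> t y) \<le> c * rho \<nu> (s + t) (x + y)" by simp
    qed
  qed
  from P1 P2 show ?thesis by blast
qed

end
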